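(* In the setting of the two-hidden-layer main theorem (with the matrix $A\in\mathbb{R}^{(K+2)\times(K+2)}$ defined there from $C_w,C_v,C_u$), let $\tilde\rho_x=\max_{i\in[n]}\|x^i\|_1$, $$\zeta_1=\rho_w\sum_{j=1}^{n_2}\Big[\rho_v\sum_{l=1}^{n_1}(\rho_u\tilde\rho_x)^{\alpha_l}\Big]^{\beta_j},\qquad \zeta_2=\rho_w\sum_{j=1}^{n_2}\beta_j\Big[\rho_v\sum_{l=1}^{n_1}(\rho_u\tilde\rho_x)^{\alpha_l}\Big]^{\beta_j}.$$ Then $C_w\le\zeta_1$ and $C_v\le\zeta_2$, and if $$p_w>4(K+2)\zeta_1+5,\quad p_v>2(K+2)\big[2\zeta_2+\|\beta\|_\infty\big]-1,\quad p_u>2(K+2)\|\alpha\|_\infty(2\zeta_2+\|\beta\|_\infty)-1,$$ then $\rho(A)<1$.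
   Context: Here $K,n_1,n_2\in\mathbb{N}$, $\rho_w,\rho_v,\rho_u>0$, $p_w,p_v,p_u\in(1,\infty)$, $p'=p/(p-1)$, $\alpha\in\mathbb{R}^{n_1}$, $\beta\in\mathbb{R}^{n_2}$ with entries $\ge1$, data $x^i\in\mathbb{R}^d_+$. $\rho_x=\max_i\|x^i\|_{p_u'}$, $\theta=\rho_v\Psi^\alpha_{p_v',p_u}(\mathbf{1},\rho_u\rho_x)$, $C_w=\rho_w\Psi^\beta_{p_w',p_v}(\mathbf{1},\theta)$, $C_v=\rho_w\Psi^\beta_{p_w',p_v}(\beta,\theta)$, $C_u=\|\alpha\|_\infty C_v$, where for $p,q\ge1$, $\gamma\in\mathbb{R}^r_{++}$, $\Psi^\gamma_{p,q}(\delta,t)=\big([\sum_{l\in J}(\delta_lt^{\gamma_l})^{pq/(q-\bar\gamma p)}]^{1-\bar\gamma p/q}+\max_{j\in J^c}(\delta_jt^{\gamma_j})^p\big)^{1/p}$ with $J=\{l:\gamma_lp<q\}$, $J^c=\{l:\gamma_lp\ge q\}$, $\bar\gamma=\min_{l\in J}\gamma_l$, empty sums/maxima $=0$. The matrix $A$: for $m,l\in[K]$, $A_{m,l}=4(p_w'-1)C_w$, $A_{m,K+1}=2(p_w'-1)(2C_v+\|\beta\|_\infty)$, $A_{m,K+2}=2(p_w'-1)(2C_u+\|\alpha\|_\infty\|\beta\|_\infty)$, $A_{K+1,l}=2(p_v'-1)(2C_w+1)$, $A_{K+1,K+1}=2(p_v'-1)(2C_v+\|\beta\|_\infty-1)$,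 $A_{K+1,K+2}=2(p_v'-1)(2C_u+\|\alpha\|_\infty\|\beta\|_\infty)$, $A_{K+2,l}=2(p_u'-1)(2C_w+1)$, $A_{K+2,K+1}=2(p_u'-1)(2C_v+\|\beta\|_\infty)$, $A_{K+2,K+2}=2(p_u'-1)(2C_u+\|\alpha\|_\infty\|\beta\|_\infty-1)$. $\rho(A)$ is the spectral radius. *)

theory Defs
  imports "HOL-Analysis.Analysis" "Jordan_Normal_Form.Spectral_Radius"
begin

definition conj_exp :: "real \<Rightarrow> real" where
  "conj_exp p = p / (p - 1)"

definition lp_norm :: "real \<Rightarrow> nat \<Rightarrow> (nat \<Rightarrow> real) \<Rightarrow> real" where
  "lp_norm p d x = (\<Sum>k<d. \<bar>x k\<bar> powr p) powr (1 / p)"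

(* sup norm of a vector in R^r, indices 0..<r (r >= 1) *)
definition sup_norm :: "nat \<Rightarrow> (nat \<Rightarrow> real) \<Rightarrow> real" where
  "sup_norm r x = Max ((\<lambda>l. \<bar>x l\<bar>) ` {..<r})"

definition Psi :: "nat \<Rightarrow> (nat \<Rightarrow> real) \<Rightarrow> real \<Rightarrow> real \<Rightarrow> (nat \<Rightarrow> real) \<Rightarrow> real \<Rightarrow> real" where
  "Psi r gamma p q delta t =
    (let J = {l \<in> {..<r}. gamma l * p < q};
         Jc = {l \<in> {..<r}. gamma l * p \<ge> q};
         gbar = (if J = {} then 0 else Min (gamma ` J));
         S = (\<Sum>l\<in>J. (delta l * t powr gamma l) powr (p * q / (q - gbar * p)));
         M = (if Jc = {} then 0 else Max ((\<lambda>j. (delta j * t powr gamma j) powr p) ` Jc))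
     in (S powr (1 - gbar * p / q) + M) powr (1 / p))"

(* the matrix A of size (K+2) x (K+2); index m < K corresponds to m+1 in [K],
   index K to K+1 and index K+1 to K+2 *)
definition A_mat :: "nat \<Rightarrow> real \<Rightarrow> real \<Rightarrow> real \<Rightarrow> real \<Rightarrow> real \<Rightarrow> real \<Rightarrow> real \<Rightarrow> real \<Rightarrow> real mat" where
  "A_mat K pw pv pu Cw Cv Cu na nb = mat (K+2) (K+2) (\<lambda>(i,j).
     if i < K then
       (if j < K then 4 * (conj_exp pw - 1) * Cw
        else if j = K then 2 * (conj_exp pw - 1) * (2 * Cv + nb)
        else 2 * (conj_exp pw - 1) * (2 * Cu + na * nb))
     else if i = K then
       (if j < K then 2 * (conj_exp pv - 1) * (2 * Cw + 1)
        else if j = K then 2 * (conj_exp pv - 1) * (2 * Cv + nb - 1)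
        else 2 * (conj_exp pv - 1) * (2 * Cu + na * nb))
     else
       (if j < K then 2 * (conj_exp pu - 1) * (2 * Cw + 1)
        else if j = K then 2 * (conj_exp pu - 1) * (2 * Cv + nb)
        else 2 * (conj_exp pu - 1) * (2 * Cu + na * nb - 1)))"

end

theory Submission
  imports Defs
begin

lemma sum_powr_le:
  assumes "finite I" "\<forall>i\<in>I. 0 \<le> f i" "(r::real) \<ge> 1"
  shows "(\<Sum>i\<in>I. f i powr r) \<le> (\<Sum>i\<in>I. f i) powr r"
proof -
  define T where "T = (\<Sum>i\<in>I. f i)"
  have T0: "T \<ge> 0" unfolding T_def using assms by (simp add: sum_nonneg)
  show ?thesis
  proof (cases "T = 0")
    case True
    then have "\<forall>i\<in>I. f i = 0" using assms sum_nonneg_eq_0_iff unfolding T_def by blast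
    then show ?thesis using True assms unfolding T_def by simp
  next
    case False
    then have Tp: "T > 0" using T0 by simp
    have le: "f i powr r \<le> (f i / T) * T powr r" if "i \<in> I" for i
    proof -
      have fi: "0 \<le> f i" "f i \<le> T" using assms that unfolding T_def
        by (auto intro: member_le_sum)
      have "(f i / T) powr r \<le> (f i / T) powr 1"
        using fi Tp assms(3) by (intro powr_mono') (auto simp: divide_le_eq_1)
      then have "(f i / T) powr r \<le> f i / T" using fi Tp by simp
      moreover have "f i powr r = (f i / T) powr r * T powr r"
        using fi Tp by (simp add: powr_divide)
      ultimately show ?thesis by (metis mult_right_mono powr_ge_zero)
    qed
    have "(\<Sum>i\<in>I. f i powr r) \<le> (\<Sum>i\<in>I. (f i / T) * T powr r)"
      using le by (rule sum_mono)
    also have "\<dots> = (\<Sum>i\<in>I. f i) / T * T powr r"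
      by (simp add: sum_distrib_right[symmetric] sum_divide_distrib[symmetric])
    also have "\<dots> = T powr r" unfolding T_def[symmetric] using Tp by simp
    finally show ?thesis unfolding T_def .
  qed
qed

lemma two_powr_le:
  assumes "(A::real) \<ge> 0" "B \<ge> 0" "p \<ge> 1"
  shows "A powr p + B powr p \<le> (A + B) powr p"
  using sum_powr_le[of "{0::nat,1}" "\<lambda>i. if i = 0 then A else B" p] assms by simp

lemma Psi_le:
  assumes "p \<ge> 1" "q > 0" "\<forall>l<r. delta l \<ge> 0" "\<forall>l<r. gamma l \<ge> 0" "t \<ge> 0"
  shows "Psi r gamma p q delta t \<le> (\<Sum>l<r. delta l * t powr gamma l)"
proof -
  define J where "J = {l \<in> {..<r}. gamma l * p < q}"
  define Jc where "Jc = {l \<in> {..<r}. gamma l * p \<ge> q}"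
  define gbar where "gbar = (if J = {} then 0 else Min (gamma ` J))"
  define v where "v = (\<lambda>l. delta l * t powr gamma l)"
  define S where "S = (\<Sum>l\<in>J. (v l) powr (p * q / (q - gbar * p)))"
  define M where "M = (if Jc = {} then 0 else Max ((\<lambda>j. (v j) powr p) ` Jc))"
  define A where "A = sum v J"
  define B where "B = sum v Jc"
  have v0: "\<forall>l<r. v l \<ge> 0" using assms unfolding v_def by simp
  have fin: "finite J" "finite Jc" unfolding J_def Jc_def by auto
  have A0: "A \<ge> 0" "B \<ge> 0" unfolding A_def B_def J_def Jc_def using v0 by (auto intro: sum_nonneg)
  have split: "(\<Sum>l<r. v l) = A + B"
  proof -
    have "{..<r} = J \<union> Jc" "J \<inter> Jc = {}" unfolding J_def Jc_def by auto
    then show ?thesis unfolding A_def B_def using fin by (simp add: sum.union_disjoint)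
  qed
  have Psi_eq: "Psi r gamma p q delta t = (S powr (1 - gbar * p / q) + M) powr (1 / p)"
    unfolding Psi_def Let_def J_def[symmetric] Jc_def[symmetric] gbar_def[symmetric] S_def M_def v_def ..
  have S0: "S \<ge> 0" unfolding S_def by (simp add: sum_nonneg)
  have SA: "S powr (1 - gbar * p / q) \<le> A powr p"
  proof (cases "J = {}")
    case True
    then show ?thesis unfolding S_def A_def by simp
  next
    case False
    have gin: "gbar \<in> gamma ` J" unfolding gbar_def using False fin by simp
    then have gp: "gbar * p < q" "gbar \<ge> 0" unfolding J_def using assms by auto
    define r' where "r' = p * q / (q - gbar * p)"
    define e where "e = 1 - gbar * p / q"
    have e0: "e > 0" unfolding e_def using gp assms by (simp add: field_simps)
    have re: "r' * e = p" unfolding r'_def e_def using gp assms by (simp add: field_simps)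
    have r'1: "r' \<ge> 1"
    proof -
      have "q - gbar * p \<le> q" "q - gbar * p > 0" using gp assms by auto
      then have "p * q / (q - gbar * p) \<ge> p * q / q"
        using assms by (intro divide_left_mono) auto
      then show ?thesis unfolding r'_def using assms by simp
    qed
    have "S \<le> A powr r'" unfolding S_def A_def r'_def[symmetric]
      using sum_powr_le[OF fin(1), of v r'] r'1 v0 unfolding J_def by auto
    then have "S powr e \<le> (A powr r') powr e" using S0 e0 by (intro powr_mono2) auto
    also have "\<dots> = A powr p" using re by (simp add: powr_powr)
    finally show ?thesis unfolding e_def .
  qed
  have MB: "M \<le> B powr p" "M \<ge> 0"
  proof -
    show "M \<le> B powr p"
    proof (cases "Jc = {}")
      case True then show ?thesis unfolding M_def by simp
    next
      case False
      have "v j powr p \<le> B powr p" if "j \<in> Jc" for j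
      proof -
        have "v j \<le> B" unfolding B_def using that fin v0 unfolding Jc_def
          by (intro member_le_sum) auto
        moreover have "v j \<ge> 0" using that v0 unfolding Jc_def by auto
        ultimately show ?thesis using assms by (intro powr_mono2) auto
      qed
      then show ?thesis unfolding M_def using False fin by simp
    qed
    show "M \<ge> 0"
    proof (cases "Jc = {}")
      case True then show ?thesis unfolding M_def by simp
    next
      case False
      then obtain j where j: "j \<in> Jc" by auto
      have "v j powr p \<le> Max ((\<lambda>j. (v j) powr p) ` Jc)" using fin j by simp
      then show ?thesis unfolding M_def using False by (simp add: order_trans[OF powr_ge_zero])
    qed
  qed
  have "S powr (1 - gbar * p / q) + M \<le> (A + B) powr p"
    using SA MB two_powr_le[OF A0 assms(1)] by linarith
  then have "(S powr (1 - gbar * p / q) + M) powr (1 / p) \<le> ((A + B) powr p) powr (1 / p)"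
    using MB assms by (intro powr_mono2) auto
  also have "\<dots> = A + B" using A0 assms by (simp add: powr_powr)
  finally show ?thesis unfolding Psi_eq split[symmetric] v_def .
qed

lemma collatz:
  fixes A :: "real mat"
  assumes A: "A \<in> carrier_mat n n" and n: "n > 0"
    and nonneg: "\<forall>i<n. \<forall>j<n. A $$ (i,j) \<ge> 0" and dpos: "\<forall>i<n. d i > 0"
    and row: "\<forall>i<n. (\<Sum>j<n. A $$ (i,j) * d j) < d i"
  shows "spectral_radius (map_mat complex_of_real A) < 1"
proof -
  define B where "B = map_mat complex_of_real A"
  have B: "B \<in> carrier_mat n n" unfolding B_def using A by simp
  from spectral_radius_mem_max(1)[OF B n] obtain k where
    k: "k \<in> spectrum B" and rk: "spectral_radius B = norm k" by auto
  from k obtain v where v: "v \<in> carrier_vec n" "v \<noteq> 0\<^sub>v n" "B *\<^sub>v v = k \<cdot>\<^sub>v v"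
    unfolding spectrum_def eigenvalue_def eigenvector_def using B by auto
  obtain j0 where j0: "j0 < n" "v $ j0 \<noteq> 0"
  proof -
    have "\<exists>j<n. v $ j \<noteq> 0"
    proof (rule ccontr)
      assume "\<not> ?thesis"
      then have "v = 0\<^sub>v n" using v(1) by (intro eq_vecI) auto
      then show False using v(2) by simp
    qed
    then show ?thesis using that by blast
  qed
  define m where "m = Max ((\<lambda>j. norm (v $ j) / d j) ` {..<n})"
  have fin: "finite ((\<lambda>j. norm (v $ j) / d j) ` {..<n})" by simp
  have ne: "(\<lambda>j. norm (v $ j) / d j) ` {..<n} \<noteq> {}" using n by auto
  obtain i where i: "i < n" "norm (v $ i) / d i = m"
    using Max_in[OF fin ne] unfolding m_def by auto
  have mj: "norm (v $ j) \<le> m * d j" if "j < n" for j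
  proof -
    have "norm (v $ j) / d j \<le> m" unfolding m_def using that by (intro Max_ge) auto
    then show ?thesis using dpos that by (simp add: divide_le_eq)
  qed
  have "norm (v $ j0) / d j0 > 0" using j0 dpos by simp
  moreover have "norm (v $ j0) / d j0 \<le> m" unfolding m_def using j0 by (intro Max_ge) auto
  ultimately have mpos: "m > 0" by linarith
  have vi: "norm (v $ i) = m * d i"
  proof -
    have "d i > 0" using dpos i by simp
    then show ?thesis using i(2) by (simp add: field_simps)
  qed
  have "(B *\<^sub>v v) $ i = (\<Sum>j<n. B $$ (i,j) * v $ j)"
    using B v(1) i by (simp add: scalar_prod_def lessThan_atLeast0)
  then have eq: "k * v $ i = (\<Sum>j<n. complex_of_real (A $$ (i,j)) * v $ j)"
    using v(3) v(1) i A unfolding B_def by simp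
  have "norm k * norm (v $ i) = norm (\<Sum>j<n. complex_of_real (A $$ (i,j)) * v $ j)"
    using eq by (metis norm_mult)
  also have "\<dots> \<le> (\<Sum>j<n. norm (complex_of_real (A $$ (i,j)) * v $ j))"
    by (rule norm_sum)
  also have "\<dots> = (\<Sum>j<n. A $$ (i,j) * norm (v $ j))"
    using nonneg i by (intro sum.cong) (auto simp: norm_mult)
  also have "\<dots> \<le> (\<Sum>j<n. A $$ (i,j) * (m * d j))"
    using nonneg i mj by (intro sum_mono mult_left_mono) auto
  also have "\<dots> = m * (\<Sum>j<n. A $$ (i,j) * d j)"
    by (simp add: sum_distrib_left algebra_simps)
  also have "\<dots> < m * d i" using row i mpos by simp
  finally have "norm k * (m * d i) < 1 * (m * d i)" using vi by simp
  then have "norm k < 1" using mpos dpos i by (simp add: mult_less_cancel_right)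
  then show ?thesis using rk unfolding B_def by simp
qed

lemma row1:
  fixes a k w v z1 S aa bb :: real
  assumes "k \<ge> 1" "a > 0" "w \<ge> 0" "v \<ge> 0" "w \<le> z1" "2* v+bb \<le> S" "aa \<ge> 1" "bb \<ge> 1"
    "a * (4*(k+2)*z1+4) < 1"
  shows "k * (4*a*w) * S + 2*a*(2* v+bb)*(2*w+1) + 2*a*(2*(aa* v)+aa*bb)*((2*w+1)/aa) < S"
proof -
  have S1: "S \<ge> 1" using assms by linarith
  have "k * (4*a*w) * S + 2*a*(2* v+bb)*(2*w+1) + 2*a*(2*(aa* v)+aa*bb)*((2*w+1)/aa)
      = a * (4*k*w*S + 4*(2* v+bb)*(2*w+1))" using assms by (simp add: field_simps)
  also have "\<dots> \<le> a * (4*k*w*S + 4*S*(2*w+1))"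
    using assms by (intro mult_left_mono add_left_mono mult_right_mono) auto
  also have "\<dots> = a * S * (4*(k+2)*w+4)" by (simp add: algebra_simps)
  also have "\<dots> \<le> a * S * (4*(k+2)*z1+4)"
    using assms S1 by (intro mult_left_mono) auto
  also have "\<dots> = S * (a * (4*(k+2)*z1+4))" by simp
  also have "\<dots> < S * 1" using assms S1 by (intro mult_strict_left_mono) auto
  finally show ?thesis by simp
qed

lemma row2:
  fixes b k w v S aa bb :: real
  assumes "k \<ge> 1" "b > 0" "w \<ge> 0" "v \<ge> 0" "2* v+bb \<le> S" "aa \<ge> 1" "bb \<ge> 1"
    "b * (2*(k+2)*S - 2) < 1"
  shows "k * (2*b*(2*w+1)) * S + 2*b*(2* v+bb-1)*(2*w+1) + 2*b*(2*(aa* v)+aa*bb)*((2*w+1)/aa) < 2*w+1"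
proof -
  have "k * (2*b*(2*w+1)) * S + 2*b*(2* v+bb-1)*(2*w+1) + 2*b*(2*(aa* v)+aa*bb)*((2*w+1)/aa)
      = b * (2*w+1) * (2*k*S + 4*(2* v+bb) - 2)" using assms by (simp add: field_simps)
  also have "\<dots> \<le> b * (2*w+1) * (2*(k+2)*S - 2)"
    using assms by (intro mult_left_mono) (auto simp: algebra_simps)
  also have "\<dots> = (2*w+1) * (b * (2*(k+2)*S - 2))" by simp
  also have "\<dots> < (2*w+1) * 1" using assms by (intro mult_strict_left_mono) auto
  finally show ?thesis by simp
qed

lemma row3:
  fixes c k w v S aa bb :: real
  assumes "k \<ge> 1" "c > 0" "w \<ge> 0" "v \<ge> 0" "2* v+bb \<le> S" "aa \<ge> 1" "bb \<ge> 1"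
    "c * (2*(k+2)*aa*S - 2) < 1"
  shows "k * (2*c*(2*w+1)) * S + 2*c*(2* v+bb)*(2*w+1) + 2*c*(2*(aa* v)+aa*bb-1)*((2*w+1)/aa) < (2*w+1)/aa"
proof -
  have "k * (2*c*(2*w+1)) * S + 2*c*(2* v+bb)*(2*w+1) + 2*c*(2*(aa* v)+aa*bb-1)*((2*w+1)/aa)
      = c * (2*w+1) / aa * (aa * (2*k*S + 4*(2* v+bb)) - 2)" using assms by (simp add: field_simps)
  also have "\<dots> \<le> c * (2*w+1) / aa * (aa * (2*(k+2)*S) - 2)"
  proof -
    have "aa * (2*k*S + 4*(2* v+bb)) \<le> aa * (2*(k+2)*S)"
      using assms by (intro mult_left_mono) (auto simp: algebra_simps)
    then show ?thesis using assms by (intro mult_left_mono) auto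
  qed
  also have "\<dots> = (2*w+1) / aa * (c * (2*(k+2)*aa*S - 2))" by (simp add: algebra_simps)
  also have "\<dots> < (2*w+1) / aa * 1" using assms by (intro mult_strict_left_mono) auto
  finally show ?thesis by simp
qed


lemma conj_exp_facts: assumes "p > (1::real)"
  shows "conj_exp p \<ge> 1" "conj_exp p - 1 = 1 / (p - 1)"
  using assms unfolding conj_exp_def by (auto simp: field_simps)

lemma lp_le1: assumes "q \<ge> 1"
  shows "lp_norm q d y \<le> lp_norm 1 d y" "lp_norm q d y \<ge> 0"
proof -
  have "(\<Sum>k<d. \<bar>y k\<bar> powr q) \<le> (\<Sum>k<d. \<bar>y k\<bar>) powr q"
    using sum_powr_le[of "{..<d}" "\<lambda>k. \<bar>y k\<bar>" q] assms by auto
  then have "(\<Sum>k<d. \<bar>y k\<bar> powr q) powr (1/q) \<le> ((\<Sum>k<d. \<bar>y k\<bar>) powr q) powr (1/q)"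
    using assms by (intro powr_mono2) (auto intro: sum_nonneg)
  also have "\<dots> = (\<Sum>k<d. \<bar>y k\<bar>)" using assms by (simp add: powr_powr sum_nonneg)
  finally show "lp_norm q d y \<le> lp_norm 1 d y" unfolding lp_norm_def by (simp add: sum_nonneg)
  show "lp_norm q d y \<ge> 0" unfolding lp_norm_def by simp
qed

lemma Max_mono_fun: assumes "(n::nat) \<ge> 1" "\<And>i. i < n \<Longrightarrow> f i \<le> (g i :: real)"
  shows "Max (f ` {..<n}) \<le> Max (g ` {..<n})"
proof -
  have "f i \<le> Max (g ` {..<n})" if "i < n" for i
    using assms(2)[OF that] that by (meson Max_ge finite_imageI finite_lessThan image_eqI lessThan_iff order_trans)
  then show ?thesis using assms(1) by (subst Max_le_iff) (auto simp: lessThan_empty_iff)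
qed

lemma sup_norm_ge1: assumes "r \<ge> 1" "\<forall>l<r. g l \<ge> 1" shows "sup_norm r g \<ge> 1"
proof -
  have "\<bar>g 0\<bar> \<le> sup_norm r g" unfolding sup_norm_def using assms by (intro Max_ge) auto
  then show ?thesis using assms by auto
qed

lemma sum_K2: "(\<Sum>j<(K::nat)+2. f j) = (\<Sum>j<K. f j) + f K + (f (K+1) :: real)"
  by (simp add: numeral_2_eq_2)



lemma Psi_nonneg: "Psi r gamma p q delta t \<ge> 0" by (simp add: Psi_def Let_def)

lemma sum_pow_mono:
  assumes "0 \<le> t" "t \<le> t'" "\<forall>j<n. 0 \<le> g j" "\<forall>j<n. 0 \<le> b j"
  shows "(\<Sum>j<n. g j * t powr b j) \<le> (\<Sum>j<n. g j * (t'::real) powr b j)"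
  using assms by (intro sum_mono mult_left_mono powr_mono2) auto

theorem mainTheorem14:
  fixes K n1 n2 n d :: nat
    and rho_x theta C_w C_v C_u rho_x1 zeta_1 zeta_2 :: real and A :: "real mat"
    and rho_w rho_v rho_u p_w p_v p_u :: real
    and alpha beta :: "nat \<Rightarrow> real"
    and x :: "nat \<Rightarrow> nat \<Rightarrow> real"
  assumes "K \<ge> 1" "n1 \<ge> 1" "n2 \<ge> 1" "n \<ge> 1"
    and "rho_w > 0" "rho_v > 0" "rho_u > 0"
    and "p_w > 1" "p_v > 1" "p_u > 1"
    and "\<forall>l<n1. alpha l \<ge> 1" "\<forall>j<n2. beta j \<ge> 1"
    and "\<forall>i<n. \<forall>k<d. x i k \<ge> 0"
    and "rho_x = Max ((\<lambda>i. lp_norm (conj_exp p_u) d (x i)) ` {..<n})"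
    and "theta = rho_v * Psi n1 alpha (conj_exp p_v) p_u (\<lambda>_. 1) (rho_u * rho_x)"
    and "C_w = rho_w * Psi n2 beta (conj_exp p_w) p_v (\<lambda>_. 1) theta"
    and "C_v = rho_w * Psi n2 beta (conj_exp p_w) p_v beta theta"
    and "C_u = sup_norm n1 alpha * C_v"
    and "A = A_mat K p_w p_v p_u C_w C_v C_u (sup_norm n1 alpha) (sup_norm n2 beta)"
    and "rho_x1 = Max ((\<lambda>i. lp_norm 1 d (x i)) ` {..<n})"
    and "zeta_1 = rho_w * (\<Sum>j<n2. (rho_v * (\<Sum>l<n1. (rho_u * rho_x1) powr alpha l)) powr beta j)"
    and "zeta_2 = rho_w * (\<Sum>j<n2. beta j * (rho_v * (\<Sum>l<n1. (rho_u * rho_x1) powr alpha l)) powr beta j)"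
  shows "C_w \<le> zeta_1 \<and> C_v \<le> zeta_2 \<and>
    ((p_w > 4 * real (K + 2) * zeta_1 + 5 \<and>
      p_v > 2 * real (K + 2) * (2 * zeta_2 + sup_norm n2 beta) - 1 \<and>
      p_u > 2 * real (K + 2) * sup_norm n1 alpha * (2 * zeta_2 + sup_norm n2 beta) - 1)
     \<longrightarrow> spectral_radius (map_mat complex_of_real A) < 1)"
proof -
  note as = assms
  have pv1: "conj_exp p_v \<ge> 1" and pw1: "conj_exp p_w \<ge> 1" and pu1: "conj_exp p_u \<ge> 1"
    using conj_exp_facts(1)[OF as(8)] conj_exp_facts(1)[OF as(9)] conj_exp_facts(1)[OF as(10)] by auto
  have rx0: "rho_x \<ge> 0"
  proof -
    have "lp_norm (conj_exp p_u) d (x 0) \<le> rho_x" unfolding as(14) using as(4) by (intro Max_ge) auto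
    then show ?thesis using lp_le1(2)[OF pu1] by (meson order_trans)
  qed
  have rxx: "rho_x \<le> rho_x1" unfolding as(14) as(20)
    using lp_le1(1)[OF pu1] as(4) by (intro Max_mono_fun) auto
  define th' where "th' = rho_v * (\<Sum>l<n1. (rho_u * rho_x1) powr alpha l)"
  have th0: "theta \<ge> 0" unfolding as(15) using as(6) by (simp add: Psi_nonneg)
  have "theta \<le> rho_v * (\<Sum>l<n1. 1 * (rho_u * rho_x) powr alpha l)"
    unfolding as(15) using as(6,7,10,11) rx0 pv1
    by (intro mult_left_mono Psi_le) force+
  also have "\<dots> \<le> th'" unfolding th'_def
  proof (intro mult_left_mono sum_mono)
    fix l assume l: "l \<in> {..<n1}"
    have h: "rho_u * rho_x \<le> rho_u * rho_x1" using as(7) rxx by simp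
    have h0: "0 \<le> rho_u * rho_x" using as(7) rx0 by simp
    have ha: "0 \<le> alpha l" using as(11) l by force
    show "1 * (rho_u * rho_x) powr alpha l \<le> (rho_u * rho_x1) powr alpha l"
      using powr_mono2[OF ha h0 h] by simp
  qed (use as(6) in auto)
  finally have thth: "theta \<le> th'" .
  have Cw0: "C_w \<ge> 0" and Cv0: "C_v \<ge> 0" unfolding as(16) as(17) using as(5)
    by (simp_all add: Psi_nonneg)
  have b0: "\<forall>j<n2. 0 \<le> beta j" using as(12) by force
  have Cwz: "C_w \<le> zeta_1"
  proof -
    have "C_w \<le> rho_w * (\<Sum>j<n2. 1 * theta powr beta j)"
      unfolding as(16) using as(5,9,12) b0 th0 pw1 by (intro mult_left_mono Psi_le) auto
    also have "\<dots> \<le> rho_w * (\<Sum>j<n2. 1 * th' powr beta j)"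
      using as(5) b0 th0 thth by (intro mult_left_mono sum_pow_mono) auto
    also have "\<dots> = zeta_1" unfolding as(21) th'_def by simp
    finally show ?thesis .
  qed
  have Cvz: "C_v \<le> zeta_2"
  proof -
    have "C_v \<le> rho_w * (\<Sum>j<n2. beta j * theta powr beta j)"
      unfolding as(17) using as(5,9,12) b0 th0 pw1 by (intro mult_left_mono Psi_le) auto
    also have "\<dots> \<le> rho_w * (\<Sum>j<n2. beta j * th' powr beta j)"
      using as(5) b0 th0 thth by (intro mult_left_mono sum_pow_mono) auto
    also have "\<dots> = zeta_2" unfolding as(22) th'_def by simp
    finally show ?thesis .
  qed
  define na where "na = sup_norm n1 alpha"
  define nb where "nb = sup_norm n2 beta"
  have na1: "na \<ge> 1" unfolding na_def using as(2,11) by (intro sup_norm_ge1) auto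
  have nb1: "nb \<ge> 1" unfolding nb_def using as(3,12) by (intro sup_norm_ge1) auto
  have "spectral_radius (map_mat complex_of_real A) < 1"
    if hw: "p_w > 4 * real (K + 2) * zeta_1 + 5"
      and hv: "p_v > 2 * real (K + 2) * (2 * zeta_2 + nb) - 1"
      and hu: "p_u > 2 * real (K + 2) * na * (2 * zeta_2 + nb) - 1"
  proof -
    define a where "a = conj_exp p_w - 1"
    define b where "b = conj_exp p_v - 1"
    define c where "c = conj_exp p_u - 1"
    define S where "S = 2 * zeta_2 + nb"
    define w where "w = C_w"
    define v where "v = C_v"
    have a: "a > 0" "a * (4*(real K+2)*zeta_1+4) < 1"
      unfolding a_def conj_exp_facts(2)[OF as(8)] using as(8) hw by (auto simp: field_simps)
    have b: "b > 0" "b * (2*(real K+2)*S - 2) < 1"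
      unfolding b_def S_def conj_exp_facts(2)[OF as(9)] using as(9) hv by (auto simp: field_simps)
    have c: "c > 0" "c * (2*(real K+2)*na*S - 2) < 1"
      unfolding c_def S_def conj_exp_facts(2)[OF as(10)] using as(10) hu by (auto simp: field_simps)
    have sS: "2 * v + nb \<le> S" unfolding S_def v_def using Cvz by simp
    have S1: "S \<ge> 1" using sS Cv0 nb1 unfolding v_def by linarith
    define dd where "dd = (\<lambda>j. if j < K then S else if j = K then 2*w+1 else (2*w+1)/na)"
    have Aij: "A $$ (i,j) = (if i < K then
       (if j < K then 4 * a * w
        else if j = K then 2 * a * (2 * v + nb)
        else 2 * a * (2 * (na * v) + na * nb))
     else if i = K then
       (if j < K then 2 * b * (2 * w + 1)
        else if j = K then 2 * b * (2 * v + nb - 1)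
        else 2 * b * (2 * (na * v) + na * nb))
     else
       (if j < K then 2 * c * (2 * w + 1)
        else if j = K then 2 * c * (2 * v + nb)
        else 2 * c * (2 * (na * v) + na * nb - 1)))" if "i < K+2" "j < K+2" for i j
      using that unfolding as(19) as(18) A_mat_def a_def b_def c_def na_def nb_def v_def w_def
      by simp
    have Acar: "A \<in> carrier_mat (K+2) (K+2)" unfolding as(19) A_mat_def by simp
    have w0: "w \<ge> 0" "v \<ge> 0" unfolding w_def v_def using Cw0 Cv0 by auto
    have nonneg: "\<forall>i<K+2. \<forall>j<K+2. A $$ (i,j) \<ge> 0"
    proof (intro allI impI)
      fix i j assume ij: "i < K+2" "j < K+2"
      have "1 * 1 \<le> na * nb" using na1 nb1 by (intro mult_mono) auto
      then have "na * nb \<ge> 1" by simp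
      moreover have "na * v \<ge> 0" using na1 w0 by simp
      ultimately have "2 * (na * v) + na * nb \<ge> 1" "na * nb \<ge> 1" by linarith+
      then show "A $$ (i,j) \<ge> 0" unfolding Aij[OF ij] using a(1) b(1) c(1) w0 na1 nb1
        by (auto intro!: mult_nonneg_nonneg)
    qed
    have dpos: "\<forall>i<K+2. dd i > 0" unfolding dd_def using S1 w0 na1 by auto
    have rows: "\<forall>i<K+2. (\<Sum>j<K+2. A $$ (i,j) * dd j) < dd i"
    proof (intro allI impI)
      fix i assume i: "i < K+2"
      have sp: "(\<Sum>j<K+2. A $$ (i,j) * dd j) = (\<Sum>j<K. A $$ (i,j) * dd j) + A $$ (i,K) * dd K + A $$ (i,K+1) * dd (K+1)"
        by (rule sum_K2)
      have Kr: "real K \<ge> 1" using as(1) by simp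
      consider "i < K" | "i = K" | "i = K+1" using i by linarith
      then show "(\<Sum>j<K+2. A $$ (i,j) * dd j) < dd i"
      proof cases
        case 1
        have "(\<Sum>j<K. A $$ (i,j) * dd j) = (\<Sum>j<K. 4 * a * w * S)"
          using 1 by (intro sum.cong) (auto simp: Aij dd_def)
        then have "(\<Sum>j<K+2. A $$ (i,j) * dd j) = real K * (4*a*w) * S + 2*a*(2* v+nb)*(2*w+1) + 2*a*(2*(na* v)+na*nb)*((2*w+1)/na)"
          unfolding sp using 1 by (simp add: Aij dd_def)
        also have "\<dots> < S" using row1[OF Kr a(1) w0 _ sS na1 nb1] a(2) Cwz unfolding w_def by simp
        finally show ?thesis using 1 unfolding dd_def by simp
      next
        case 2
        have "(\<Sum>j<K. A $$ (i,j) * dd j) = (\<Sum>j<K. 2 * b * (2 * w + 1) * S)"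
          using 2 by (intro sum.cong) (auto simp: Aij dd_def)
        then have "(\<Sum>j<K+2. A $$ (i,j) * dd j) = real K * (2*b*(2*w+1)) * S + 2*b*(2* v+nb-1)*(2*w+1) + 2*b*(2*(na* v)+na*nb)*((2*w+1)/na)"
          unfolding sp using 2 by (simp add: Aij dd_def)
        also have "\<dots> < 2*w+1" using row2[OF Kr b(1) w0 sS na1 nb1] b(2) by simp
        finally show ?thesis using 2 unfolding dd_def by simp
      next
        case 3
        have "(\<Sum>j<K. A $$ (i,j) * dd j) = (\<Sum>j<K. 2 * c * (2 * w + 1) * S)"
          using 3 by (intro sum.cong) (auto simp: Aij dd_def)
        then have "(\<Sum>j<K+2. A $$ (i,j) * dd j) = real K * (2*c*(2*w+1)) * S + 2*c*(2* v+nb)*(2*w+1) + 2*c*(2*(na* v)+na*nb-1)*((2*w+1)/na)"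
          unfolding sp using 3 by (simp add: Aij dd_def)
        also have "\<dots> < (2*w+1)/na" using row3[OF Kr c(1) w0 sS na1 nb1] c(2) by simp
        finally show ?thesis using 3 unfolding dd_def by simp
      qed
    qed
    show ?thesis using collatz[OF Acar _ nonneg dpos rows] by simp
  qed
  then show ?thesis using Cwz Cvz unfolding na_def nb_def by blast
qed


end
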